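(* Let $M_1,M_2$ be matroids on a common ground set $E$, $\psi\colon E\to\Gamma$ a labeling to an abelian group, and $w\colon E\to\mathbb{R}$ a weight function. Let $B_0$ be a minimum-weight common basis of $M_1,M_2$ with $\psi(B_0)=0$, and let $C$ be a directed cycle of $D_{M_1,M_2}(B_0)$ with $\psi'(C)\neq 0$ that minimizes $w'(C)$ among all such directed cycles. Then $w(B_0\triangle V(C))\le w(B^* )$ for every common basis $B^*$ of $M_1,M_2$ with $\psi(B^* )\ne0$.
   Context: $\psi(S):=\sum_{x\in S}\psi(x)$, $w(S):=\sum_{x\in S}w(x)$. For a common basis $B$, the digraph $D_{M_1,M_2}(B)$ has vertex set $E$ and arcs: for each $x\in B$, $y\in E\setminus B$ with $B-x+y$ a basis of $M_1$, an arc $xy$ with label $\psi'(xy):=\psi(y)$ and weight $w'(xy):=w(y)$; for each $x\in B$, $y\in E\setminus B$ with $B-x+y$ a basis of $M_2$, an arc $yx$ with label $\psi'(yx):=-\psi(x)$ and weight $w'(yx):=-w(x)$. Labels and weights of directed cycles are the sums over their arcs. *)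

theory Defs
  imports Complex_Main
begin

definition matroid :: "'a set \<Rightarrow> ('a set \<Rightarrow> bool) \<Rightarrow> bool" where
  "matroid E indep \<longleftrightarrow>
     finite E \<and> indep {} \<and>
     (\<forall>X. indep X \<longrightarrow> X \<subseteq> E) \<and>
     (\<forall>X Y. indep X \<and> Y \<subseteq> X \<longrightarrow> indep Y) \<and>
     (\<forall>X Y. indep X \<and> indep Y \<and> card X < card Y \<longrightarrow>
        (\<exists>y\<in>Y - X. indep (insert y X)))"

definition basis :: "('a set \<Rightarrow> bool) \<Rightarrow> 'a set \<Rightarrow> bool" where
  "basis indep X \<longleftrightarrow> indep X \<and> (\<forall>Y. indep Y \<and> X \<subseteq> Y \<longrightarrow> Y = X)"

definition common_basis :: "('a set \<Rightarrow> bool) \<Rightarrow> ('a set \<Rightarrow> bool) \<Rightarrow> 'a set \<Rightarrow> bool" where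
  "common_basis I1 I2 B \<longleftrightarrow> basis I1 B \<and> basis I2 B"

definition exch_arc :: "'a set \<Rightarrow> ('a set \<Rightarrow> bool) \<Rightarrow> ('a set \<Rightarrow> bool) \<Rightarrow> 'a set
                        \<Rightarrow> 'a \<Rightarrow> 'a \<Rightarrow> bool" where
  "exch_arc E I1 I2 B u v \<longleftrightarrow>
     (u \<in> B \<and> v \<in> E - B \<and> basis I1 (insert v (B - {u}))) \<or>
     (u \<in> E - B \<and> v \<in> B \<and> basis I2 (insert u (B - {v})))"

text \<open>Label psi' / weight w' of an arc u v: the value f(v) if v is the head outside B
  (arc of the first kind), and -f(v) if the head v lies in B (arc of the second kind).\<close>
definition arc_val :: "'a set \<Rightarrow> ('a \<Rightarrow> 'g::ab_group_add) \<Rightarrow> 'a \<Rightarrow> 'a \<Rightarrow> 'g" where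
  "arc_val B f u v = (if v \<in> B then - f v else f v)"

definition dicycle :: "'a set \<Rightarrow> ('a set \<Rightarrow> bool) \<Rightarrow> ('a set \<Rightarrow> bool) \<Rightarrow> 'a set
                       \<Rightarrow> 'a list \<Rightarrow> bool" where
  "dicycle E I1 I2 B cs \<longleftrightarrow>
     distinct cs \<and> length cs \<ge> 2 \<and>
     (\<forall>i < length cs. exch_arc E I1 I2 B (cs ! i) (cs ! ((i + 1) mod length cs)))"

definition cycle_val :: "'a set \<Rightarrow> ('a \<Rightarrow> 'g::ab_group_add) \<Rightarrow> 'a list \<Rightarrow> 'g" where
  "cycle_val B f cs = (\<Sum>i<length cs. arc_val B f (cs ! i) (cs ! ((i + 1) mod length cs)))"

end

theory Submission
  imports Defs "HOL-Library.Product_Lexorder" "HOL-Combinatorics.Orbits"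
begin

locale mat =
  fixes E :: "'a set" and I :: "'a set \<Rightarrow> bool"
  assumes m: "matroid E I"
begin

lemma finE: "finite E" using m unfolding matroid_def by blast
lemma indep_sub: "I X \<Longrightarrow> X \<subseteq> E" using m unfolding matroid_def by blast
lemma indep_fin: "I X \<Longrightarrow> finite X" using indep_sub finE finite_subset by blast
lemma indep_mono: "I X \<Longrightarrow> Y \<subseteq> X \<Longrightarrow> I Y" using m unfolding matroid_def by blast
lemma aug: "I X \<Longrightarrow> I Y \<Longrightarrow> card X < card Y \<Longrightarrow> \<exists>y\<in>Y - X. I (insert y X)"
  using m unfolding matroid_def by blast

lemma indep_card_le:
  assumes "basis I B" "I X" shows "card X \<le> card B"
proof (rule ccontr)
  assume "\<not> ?thesis"
  then obtain y where y: "y \<in> X - B" "I (insert y B)"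
    using aug[of B X] assms unfolding basis_def by auto
  then show False using assms(1) unfolding basis_def by blast
qed

lemma basis_card: "basis I A \<Longrightarrow> basis I B \<Longrightarrow> card A = card B"
  using indep_card_le by (meson basis_def le_antisym)

lemma indep_card_basis:
  assumes "basis I B" "I X" "card X = card B" shows "basis I X"
  unfolding basis_def
proof (intro conjI allI impI)
  show "I X" by fact
  fix Y assume Y: "I Y \<and> X \<subseteq> Y"
  show "Y = X"
  proof (rule ccontr)
    assume "Y \<noteq> X"
    with Y have "card X < card Y" using indep_fin[of Y]
      by (intro psubset_card_mono) auto
    with indep_card_le[OF assms(1), of Y] Y assms(3) show False by simp
  qed
qed

lemma basis_insert_dep:
  assumes "basis I B" "y \<notin> B" shows "\<not> I (insert y B)"
  using assms unfolding basis_def by blast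

lemma extend:
  assumes "finite T" "I S" "S \<subseteq> T"
  shows "\<exists>K. S \<subseteq> K \<and> K \<subseteq> T \<and> I K \<and> (\<forall>z\<in>T - K. \<not> I (insert z K))"
  using assms(2,3)
proof (induction "card (T - S)" arbitrary: S rule: less_induct)
  case less
  show ?case
  proof (cases "\<exists>z\<in>T - S. I (insert z S)")
    case True
    then obtain z where z: "z \<in> T - S" "I (insert z S)" by blast
    have "card (T - insert z S) < card (T - S)"
      using z assms(1) by (metis Diff_insert card_Diff1_less finite_Diff)
    from less(1)[OF this z(2)] z less.prems show ?thesis by blast
  next
    case False
    then show ?thesis using less.prems by blast
  qed
qed

lemma exch_equiv:
  assumes IB: "I B" and x1: "x1 \<in> B" and xp: "xp \<in> B" "xp \<noteq> x1"
    and y1: "y1 \<notin> B" and yp: "yp \<notin> B" "yp \<noteq> y1"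
    and I1: "I (insert y1 (B - {x1}))" and D: "\<not> I (insert yp (B - {x1}))"
  shows "I (insert yp (insert y1 (B - {x1}) - {xp})) \<longleftrightarrow> I (insert yp (B - {xp}))"
proof -
  define A where "A = B - {x1, xp}"
  have fB: "finite B" using IB indep_fin by blast
  have fA: "finite A" using fB A_def by simp
  have c2: "card {x1, xp} = 2" using xp by simp
  have "card {x1, xp} \<le> card B" using fB x1 xp by (intro card_mono) auto
  moreover have "card A = card B - card {x1, xp}" unfolding A_def
    using fB x1 xp by (intro card_Diff_subset) auto
  ultimately have cA: "card A + 2 = card B" using c2 by simp
  have e1: "insert yp (insert y1 (B - {x1}) - {xp}) = insert yp (insert y1 A)"
    unfolding A_def using y1 xp by auto
  have e2: "insert yp (B - {xp}) = insert yp (insert x1 A)"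
    unfolding A_def using x1 xp by auto
  have e3: "insert yp (B - {x1}) = insert yp (insert xp A)"
    unfolding A_def using x1 xp by auto
  have e4: "insert y1 (B - {x1}) = insert y1 (insert xp A)"
    unfolding A_def using x1 xp by auto
  have eB: "B = insert x1 (insert xp A)" unfolding A_def using x1 xp by auto
  have ypA: "yp \<notin> A" "y1 \<notin> A" "x1 \<notin> A" "xp \<notin> A" using yp y1 unfolding A_def by auto
  have c1: "card (insert yp A) = card A + 1" using ypA fA by simp
  show ?thesis
  proof
    assume H: "I (insert yp (insert y1 (B - {x1}) - {xp}))"
    hence "I (insert yp A)" unfolding e1 using indep_mono by blast
    moreover have "card (insert yp A) < card B" using c1 cA by simp
    ultimately obtain z where z: "z \<in> B - insert yp A" "I (insert z (insert yp A))"
      using aug IB by blast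
    have "z = x1 \<or> z = xp" using z(1) eB by auto
    moreover have "z \<noteq> xp" using z(2) D e3 by (metis insert_commute)
    ultimately show "I (insert yp (B - {xp}))" using z(2) e2 by (metis insert_commute)
  next
    assume H: "I (insert yp (B - {xp}))"
    hence "I (insert yp A)" unfolding e2 using indep_mono by blast
    moreover have "card (insert yp A) < card (insert y1 (insert xp A))"
      using c1 ypA fA y1 xp x1 by (cases "y1 = xp") auto
    ultimately obtain z where z: "z \<in> insert y1 (insert xp A) - insert yp A" "I (insert z (insert yp A))"
      using aug I1 e4 by metis
    have "z = y1 \<or> z = xp" using z(1) by auto
    moreover have "z \<noteq> xp" using z(2) D e3 by (metis insert_commute)
    ultimately show "I (insert yp (insert y1 (B - {x1}) - {xp}))" using z(2) e1
      by (metis insert_commute)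
  qed
qed

lemma krogdahl:
  assumes "finite P"
  shows "I B \<Longrightarrow> inj_on xs P \<Longrightarrow> inj_on ys P \<Longrightarrow> xs ` P \<subseteq> B \<Longrightarrow> ys ` P \<inter> B = {}
    \<Longrightarrow> (\<forall>a\<in>P. I (insert (ys a) (B - {xs a})))
    \<Longrightarrow> (\<forall>S\<subseteq>P. S \<noteq> {} \<longrightarrow> (\<exists>a\<in>S. \<forall>b\<in>S. b \<noteq> a \<longrightarrow> \<not> I (insert (ys b) (B - {xs a}))))
    \<Longrightarrow> I ((B - xs ` P) \<union> ys ` P)"
  using assms
proof (induction "card P" arbitrary: P B rule: less_induct)
  case (less P B)
  note IB = less.prems(1) and ixs = less.prems(2) and iys = less.prems(3)
    and sx = less.prems(4) and sy = less.prems(5) and ex = less.prems(6) and sk = less.prems(7)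
    and fP = less.prems(8)
  show ?case
  proof (cases "P = {}")
    case True then show ?thesis using IB by simp
  next
    case False
    then obtain a where a: "a \<in> P" and sink: "\<forall>b\<in>P. b \<noteq> a \<longrightarrow> \<not> I (insert (ys b) (B - {xs a}))"
      using sk by blast
    define B' where "B' = insert (ys a) (B - {xs a})"
    define P' where "P' = P - {a}"
    have cP: "card P' < card P" unfolding P'_def using a fP by (metis card_Diff1_less)
    have IB': "I B'" using ex a B'_def by blast
    have eqv: "I (insert (ys b) (B' - {xs a'})) \<longleftrightarrow> I (insert (ys b) (B - {xs a'}))"
      if "a' \<in> P'" "b \<in> P'" for a' b
      unfolding B'_def
    proof (rule exch_equiv[OF IB])
      show "xs a \<in> B" using sx a by auto
      show "xs a' \<in> B" using sx that P'_def by auto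
      show "xs a' \<noteq> xs a" using ixs that a P'_def by (auto dest: inj_onD)
      show "ys a \<notin> B" using sy a by auto
      show "ys b \<notin> B" using sy that P'_def by auto
      show "ys b \<noteq> ys a" using iys that a P'_def by (auto dest: inj_onD)
      show "I (insert (ys a) (B - {xs a}))" using ex a by blast
      show "\<not> I (insert (ys b) (B - {xs a}))" using sink that P'_def by auto
    qed
    have "I ((B' - xs ` P') \<union> ys ` P')"
    proof (rule less.hyps[OF cP IB'])
      show "inj_on xs P'" "inj_on ys P'" using ixs iys P'_def by (auto intro: inj_on_subset)
      show "xs ` P' \<subseteq> B'"
      proof
        fix z assume "z \<in> xs ` P'"
        then obtain b where b: "b \<in> P'" "z = xs b" by auto
        have "xs b \<noteq> xs a" using ixs b a P'_def by (auto dest: inj_onD)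
        then show "z \<in> B'" using b sx P'_def B'_def by auto
      qed
      show "ys ` P' \<inter> B' = {}"
      proof -
        { fix b assume b: "b \<in> P'" "ys b \<in> B'"
          have "ys b \<noteq> ys a" using iys b a P'_def by (auto dest: inj_onD)
          hence False using b sy P'_def B'_def by auto }
        thus ?thesis by blast
      qed
      show "\<forall>a\<in>P'. I (insert (ys a) (B' - {xs a}))" using eqv ex P'_def by auto
      show "\<forall>S\<subseteq>P'. S \<noteq> {} \<longrightarrow> (\<exists>a\<in>S. \<forall>b\<in>S. b \<noteq> a \<longrightarrow> \<not> I (insert (ys b) (B' - {xs a})))"
      proof (intro allI impI)
        fix S assume S: "S \<subseteq> P'" "S \<noteq> {}"
        then obtain a' where "a' \<in> S" "\<forall>b\<in>S. b \<noteq> a' \<longrightarrow> \<not> I (insert (ys b) (B - {xs a'}))"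
          using sk P'_def by (metis Diff_subset subset_trans)
        then show "\<exists>a\<in>S. \<forall>b\<in>S. b \<noteq> a \<longrightarrow> \<not> I (insert (ys b) (B' - {xs a}))"
          using eqv S by blast
      qed
      show "finite P'" using fP P'_def by simp
    qed
    moreover have "(B' - xs ` P') \<union> ys ` P' = (B - xs ` P) \<union> ys ` P"
    proof -
      have "ys a \<notin> xs ` P'" using sx sy a P'_def by auto
      moreover have "P = insert a P'" using a P'_def by auto
      ultimately show ?thesis unfolding B'_def by auto
    qed
    ultimately show ?thesis by simp
  qed
qed

end

lemma hall:
  assumes "finite K" "\<forall>i\<in>K. finite (A i)" "\<forall>S\<subseteq>K. card S \<le> card (\<Union>(A ` S))"
  shows "\<exists>f. inj_on f K \<and> (\<forall>i\<in>K. f i \<in> A i)"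
  using assms
proof (induction "card K" arbitrary: K A rule: less_induct)
  case (less K A)
  note fK = less.prems(1) and fA = less.prems(2) and H = less.prems(3)
  have fU: "finite (\<Union>(A ` S))" if "S \<subseteq> K" for S
    using that fK fA by (meson finite_UN_I finite_subset subsetD)
  show ?case
  proof (cases "K = {}")
    case True then show ?thesis by auto
  next
    case Kne: False
    show ?thesis
    proof (cases "\<exists>S. S \<subseteq> K \<and> S \<noteq> {} \<and> S \<noteq> K \<and> card (\<Union>(A ` S)) = card S")
      case True
      then obtain S0 where S0: "S0 \<subseteq> K" "S0 \<noteq> {}" "S0 \<noteq> K" "card (\<Union>(A ` S0)) = card S0" by blast
      define U where "U = \<Union>(A ` S0)"
      have c0: "card S0 < card K" using S0 fK by (meson psubsetI psubset_card_mono)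
      obtain f1 where f1: "inj_on f1 S0" "\<forall>i\<in>S0. f1 i \<in> A i"
        using less.hyps[OF c0, of A] S0 fK fA H by (meson finite_subset subset_trans subsetD)
      define A' where "A' = (\<lambda>i. A i - U)"
      have c1: "card (K - S0) < card K" 
      proof -
        have "card (K - S0) = card K - card S0" using S0 fK by (intro card_Diff_subset) (auto intro: finite_subset)
        moreover have "card S0 > 0" using S0 fK by (auto intro: finite_subset simp: card_gt_0_iff)
        moreover have "card S0 \<le> card K" using S0 fK by (intro card_mono) auto
        ultimately show ?thesis by linarith
      qed
      have "\<exists>f. inj_on f (K - S0) \<and> (\<forall>i\<in>K - S0. f i \<in> A' i)"
      proof (rule less.hyps[OF c1])
        show "finite (K - S0)" using fK by simp
        show "\<forall>i\<in>K - S0. finite (A' i)" using fA A'_def by auto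
        show "\<forall>S\<subseteq>K - S0. card S \<le> card (\<Union>(A' ` S))"
        proof (intro allI impI)
          fix S assume S: "S \<subseteq> K - S0"
          have e: "\<Union>(A' ` S) = \<Union>(A ` (S \<union> S0)) - U" unfolding A'_def U_def by auto
          have sub: "U \<subseteq> \<Union>(A ` (S \<union> S0))" unfolding U_def by auto
          have fin: "finite (\<Union>(A ` (S \<union> S0)))" using fU S S0 by auto
          have "card (\<Union>(A' ` S)) = card (\<Union>(A ` (S \<union> S0))) - card U"
            unfolding e using card_Diff_subset[OF finite_subset[OF sub fin] sub] .
          moreover have "card (S \<union> S0) \<le> card (\<Union>(A ` (S \<union> S0)))" using H S S0 by (meson Diff_subset Un_least order_trans)
          moreover have "card (S \<union> S0) = card S + card S0"
            using S fK S0 by (intro card_Un_disjoint) (auto intro: finite_subset)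
          moreover have "card U = card S0" using S0 U_def by simp
          ultimately show "card S \<le> card (\<Union>(A' ` S))" by linarith
        qed
      qed
      then obtain f2 where f2: "inj_on f2 (K - S0)" "\<forall>i\<in>K - S0. f2 i \<in> A' i" by blast
      define f where "f = (\<lambda>i. if i \<in> S0 then f1 i else f2 i)"
      have "inj_on f K"
      proof (rule inj_onI)
        fix i j assume ij: "i \<in> K" "j \<in> K" "f i = f j"
        show "i = j"
        proof (cases "i \<in> S0"; cases "j \<in> S0")
          assume "i \<in> S0" "j \<in> S0" then show ?thesis using ij f1 f_def by (auto dest: inj_onD)
        next
          assume "i \<notin> S0" "j \<notin> S0" then show ?thesis using ij f2 f_def by (auto dest: inj_onD)
        next
          assume a: "i \<in> S0" "j \<notin> S0"
          then have "f i \<in> U" using f1 f_def U_def by auto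
          moreover have "f j \<notin> U" using a ij(2) f2 f_def A'_def by auto
          ultimately show ?thesis using ij by simp
        next
          assume a: "i \<notin> S0" "j \<in> S0"
          then have "f j \<in> U" using f1 f_def U_def by auto
          moreover have "f i \<notin> U" using a ij(1) f2 f_def A'_def by auto
          ultimately show ?thesis using ij by simp
        qed
      qed
      moreover have "\<forall>i\<in>K. f i \<in> A i" using f1 f2 f_def A'_def by auto
      ultimately show ?thesis by blast
    next
      case False
      then have strict: "card S < card (\<Union>(A ` S))" if "S \<subseteq> K" "S \<noteq> {}" "S \<noteq> K" for S
        using that H by (metis le_neq_implies_less)
      obtain i0 where i0: "i0 \<in> K" using Kne by blast
      have "card {i0} \<le> card (A i0)" using H i0 
      proof -
        have "{i0} \<subseteq> K" using i0 by simp
        then have "card {i0} \<le> card (\<Union>(A ` {i0}))" using H by blast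
        then show ?thesis by simp
      qed
      then have "A i0 \<noteq> {}" by auto
      then obtain a where a: "a \<in> A i0" by blast
      define A' where "A' = (\<lambda>i. A i - {a})"
      have c1: "card (K - {i0}) < card K" using i0 fK by (metis card_Diff1_less)
      have "\<exists>f. inj_on f (K - {i0}) \<and> (\<forall>i\<in>K - {i0}. f i \<in> A' i)"
      proof (rule less.hyps[OF c1])
        show "finite (K - {i0})" using fK by simp
        show "\<forall>i\<in>K - {i0}. finite (A' i)" using fA A'_def by auto
        show "\<forall>S\<subseteq>K - {i0}. card S \<le> card (\<Union>(A' ` S))"
        proof (intro allI impI)
          fix S assume S: "S \<subseteq> K - {i0}"
          show "card S \<le> card (\<Union>(A' ` S))"
          proof (cases "S = {}")
            case True then show ?thesis by simp
          next
            case False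
            have "card S < card (\<Union>(A ` S))" using strict[of S] S False i0 by auto
            moreover have "\<Union>(A' ` S) = \<Union>(A ` S) - {a}" unfolding A'_def by auto
            moreover have "card (\<Union>(A ` S)) - 1 \<le> card (\<Union>(A ` S) - {a})"
              by (simp add: card_Diff_singleton_if)
            ultimately show ?thesis
            proof -
              assume h: "card S < card (\<Union>(A ` S))" "\<Union>(A' ` S) = \<Union>(A ` S) - {a}"
                "card (\<Union>(A ` S)) - 1 \<le> card (\<Union>(A ` S) - {a})"
              have "card S \<le> card (\<Union>(A ` S)) - 1" using h(1) by linarith
              then show ?thesis using h(2,3) by simp
            qed
          qed
        qed
      qed
      then obtain f' where f': "inj_on f' (K - {i0})" "\<forall>i\<in>K - {i0}. f' i \<in> A' i" by blast
      define f where "f = f'(i0 := a)"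
      have "inj_on f K"
      proof -
        have "inj_on f (K - {i0})" using f' f_def by (auto simp: inj_on_def)
        moreover have "f i0 \<notin> f ` (K - {i0})" using f' f_def A'_def by auto
        ultimately have "inj_on f (insert i0 (K - {i0}))" by (simp only: inj_on_insert) simp
        moreover have "insert i0 (K - {i0}) = K" using i0 by blast
        ultimately show ?thesis by simp
      qed
      moreover have "\<forall>i\<in>K. f i \<in> A i" using f' f_def A'_def a by auto
      ultimately show ?thesis by blast
    qed
  qed
qed


context mat
begin

lemma card_swap: "finite B \<Longrightarrow> x \<in> B \<Longrightarrow> y \<notin> B \<Longrightarrow> card (insert y (B - {x})) = card B"
  by (simp add: card_Diff_singleton) (metis card_Diff1_less card_gt_0_iff Suc_pred empty_iff)

lemma brualdi:
  assumes bB: "basis I B" and bB': "basis I B'"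
  shows "\<exists>h. bij_betw h (B' - B) (B - B') \<and> (\<forall>y\<in>B' - B. basis I (insert y (B - {h y})))"
proof -
  have IB: "I B" and IB': "I B'" using bB bB' unfolding basis_def by auto
  have fB: "finite B" and fB': "finite B'" using IB IB' indep_fin by auto
  define N where "N = (\<lambda>y. {x \<in> B - B'. I (insert y (B - {x}))})"
  have "\<exists>h. inj_on h (B' - B) \<and> (\<forall>y\<in>B' - B. h y \<in> N y)"
  proof (rule hall)
    show "finite (B' - B)" using fB' by simp
    show "\<forall>y\<in>B' - B. finite (N y)" using fB N_def by auto
    show "\<forall>S\<subseteq>B' - B. card S \<le> card (\<Union>(N ` S))"
    proof (intro allI impI)
      fix S assume S: "S \<subseteq> B' - B"
      define Z where "Z = (B \<inter> B') \<union> \<Union>(N ` S)"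
      have ZB: "Z \<subseteq> B" unfolding Z_def N_def by auto
      have IZ: "I Z" using indep_mono[OF IB ZB] .
      have nZ: "\<not> I (insert y Z)" if y: "y \<in> S" for y
      proof
        assume H: "I (insert y Z)"
        have yB: "y \<notin> B" using y S by auto
        obtain K where K: "insert y Z \<subseteq> K" "K \<subseteq> insert y B" "I K"
          "\<forall>z\<in>insert y B - K. \<not> I (insert z K)"
          using extend[of "insert y B" "insert y Z"] H ZB fB by (meson finite_insert insert_mono)
        have fK: "finite K" using K indep_fin by auto
        have "card K \<le> card B" using indep_card_le[OF bB K(3)] .
        moreover have "\<not> card K < card B"
        proof
          assume "card K < card B"
          then obtain z where "z \<in> B - K" "I (insert z K)" using aug[OF K(3) IB] by blast
          then show False using K(4) by blast
        qed
        ultimately have cK: "card K = card B" by simp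
        have "K \<noteq> insert y B" using basis_insert_dep[OF bB yB] K(3) by auto
        then obtain x where x: "x \<in> insert y B" "x \<notin> K" using K(2) by blast
        have xB: "x \<in> B" using x K(1) by auto
        have Ksub: "K \<subseteq> insert y (B - {x})" using K(2) x by auto
        have "K = insert y (B - {x})"
          using card_subset_eq[OF _ Ksub] card_swap[OF fB xB yB] cK fB by auto
        hence "I (insert y (B - {x}))" using K(3) by simp
        moreover have "x \<notin> Z" using x K(1) by auto
        ultimately have "x \<in> N y" "x \<notin> \<Union>(N ` S)" using xB Z_def N_def by auto
        then show False using y by auto
      qed
      define W where "W = S \<union> (B \<inter> B')"
      have IW: "I W" using indep_mono[OF IB', of W] S unfolding W_def by blast
      have "\<not> card Z < card W"
      proof
        assume "card Z < card W"
        then obtain z where z: "z \<in> W - Z" "I (insert z Z)" using aug[OF IZ IW] by blast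
        then have "z \<in> S" using W_def Z_def by auto
        then show False using nZ z by blast
      qed
      hence le: "card W \<le> card Z" by simp
      have "card W = card S + card (B \<inter> B')" unfolding W_def
        using S fB fB' by (intro card_Un_disjoint) (auto intro: finite_subset)
      moreover have "card Z = card (B \<inter> B') + card (\<Union>(N ` S))" unfolding Z_def
        using fB by (intro card_Un_disjoint) (auto simp: N_def intro: finite_subset)
      ultimately show "card S \<le> card (\<Union>(N ` S))" using le by simp
    qed
  qed
  then obtain h where h: "inj_on h (B' - B)" "\<forall>y\<in>B' - B. h y \<in> N y" by blast
  have cc: "card (B' - B) = card (B - B')"
  proof -
    have "card B = card B'" using basis_card[OF bB bB'] .
    moreover have "card (B' - B) = card B' - card (B' \<inter> B)" using fB' by (simp add: card_Diff_subset_Int)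
    moreover have "card (B - B') = card B - card (B \<inter> B')" using fB by (simp add: card_Diff_subset_Int)
    ultimately show ?thesis by (simp add: Int_commute)
  qed
  have img: "h ` (B' - B) \<subseteq> B - B'" using h(2) N_def by auto
  have "h ` (B' - B) = B - B'"
    using card_subset_eq[OF _ img] card_image[OF h(1)] cc fB by auto
  then have "bij_betw h (B' - B) (B - B')" using h(1) by (simp add: bij_betw_def)
  moreover have "\<forall>y\<in>B' - B. basis I (insert y (B - {h y}))"
  proof
    fix y assume y: "y \<in> B' - B"
    then have "I (insert y (B - {h y}))" "h y \<in> B" using h(2) N_def by auto
    then show "basis I (insert y (B - {h y}))"
      using indep_card_basis[OF bB] card_swap[OF fB] y by auto
  qed
  ultimately show ?thesis by blast
qed

end

lemma arc_val_head: "arc_val B f u v = arc_val B f v v"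
  unfolding arc_val_def by simp

lemma sum_rot:
  fixes h :: "nat \<Rightarrow> 'g::ab_group_add"
  assumes "0 < n"
  shows "(\<Sum>i<n. h ((i + 1) mod n)) = (\<Sum>i<n. h i)"
proof -
  have bij: "bij_betw (\<lambda>i. (i + 1) mod n) {..<n} {..<n}"
  proof (rule bij_betw_imageI)
    show "inj_on (\<lambda>i. (i + 1) mod n) {..<n}"
    proof (rule inj_onI)
      fix a b assume "a \<in> {..<n}" "b \<in> {..<n}" "(a + 1) mod n = (b + 1) mod n"
      then show "a = b" by (simp add: mod_if split: if_splits)
    qed
    then show "(\<lambda>i. (i + 1) mod n) ` {..<n} = {..<n}"
      using assms by (intro endo_inj_surj) auto
  qed
  show ?thesis using sum.reindex_bij_betw[OF bij, of h] by simp
qed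

lemma cycle_val_set:
  assumes "distinct cs"
  shows "cycle_val B f cs = (\<Sum>v\<in>set cs. arc_val B f v v)"
proof (cases "cs = []")
  case True then show ?thesis by (simp add: cycle_val_def)
next
  case False
  then have n: "0 < length cs" by simp
  have "cycle_val B f cs = (\<Sum>i<length cs. arc_val B f (cs ! ((i + 1) mod length cs)) (cs ! ((i + 1) mod length cs)))"
    unfolding cycle_val_def by (subst arc_val_head) simp
  also have "\<dots> = (\<Sum>i<length cs. arc_val B f (cs ! i) (cs ! i))"
    using sum_rot[OF n, of "\<lambda>i. arc_val B f (cs ! i) (cs ! i)"] by simp
  also have "\<dots> = sum_list (map (\<lambda>v. arc_val B f v v) cs)"
    by (simp add: sum_list_sum_nth atLeast0LessThan)
  also have "\<dots> = (\<Sum>v\<in>set cs. arc_val B f v v)"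
    using assms by (simp add: sum_list_distinct_conv_sum_set)
  finally show ?thesis .
qed

lemma sum_arc_val_split:
  assumes "finite S"
  shows "(\<Sum>v\<in>S. arc_val B f v v) = sum f (S - B) - sum f (S \<inter> B)"
proof -
  have "(\<Sum>v\<in>S. arc_val B f v v) = (\<Sum>v\<in>S - B. arc_val B f v v) + (\<Sum>v\<in>S \<inter> B. arc_val B f v v)"
  proof -
    have "S = (S - B) \<union> (S \<inter> B)" by blast
    then show ?thesis using assms by (metis sum.union_disjoint finite_Diff finite_Int Diff_disjoint Int_Diff_disjoint Int_commute)
  qed
  also have "\<dots> = sum f (S - B) + (\<Sum>v\<in>S \<inter> B. - f v)"
    unfolding arc_val_def by (intro arg_cong2[where f="(+)"] sum.cong) auto
  finally show ?thesis by (simp add: sum_negf)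
qed

lemma symdiff_sum:
  fixes w :: "'a \<Rightarrow> real"
  assumes "finite B0" "distinct C"
  shows "sum w (B0 - set C \<union> (set C - B0)) = sum w B0 + cycle_val B0 w C"
proof -
  have "sum w (B0 - set C \<union> (set C - B0)) = sum w (B0 - set C) + sum w (set C - B0)"
    using assms by (intro sum.union_disjoint) auto
  moreover have "sum w (B0 - set C) = sum w B0 - sum w (set C \<inter> B0)"
  proof -
    have "B0 - set C = B0 - (set C \<inter> B0)" by blast
    then show ?thesis using assms by (simp add: sum_diff)
  qed
  moreover have "cycle_val B0 w C = sum w (set C - B0) - sum w (set C \<inter> B0)"
    using cycle_val_set[OF assms(2), of B0 w] sum_arc_val_split[of "set C" B0 w] by simp
  ultimately show ?thesis by simp
qed


lemma modinj:
  fixes n :: nat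
  assumes "i < n" "j < n" "(q + i) mod n = (q + j) mod n"
  shows "i = j"
proof (rule ccontr)
  assume ne: "i \<noteq> j"
  { fix a b :: nat assume ab: "a < b" "b < n" "(q + a) mod n = (q + b) mod n"
    then have "n dvd (q + b) - (q + a)" using mod_eq_dvd_iff_nat[of "q + a" "q + b" n] by simp
    then have "n dvd b - a" by simp
    moreover have "0 < b - a" "b - a < n" using ab by auto
    ultimately have False using nat_dvd_not_less by blast }
  then show False using assms ne by (metis linorder_neqE_nat)
qed

locale setting = M1: mat E I1 + M2: mat E I2 for E I1 I2 +
  fixes B0 :: "'a set" and w :: "'a \<Rightarrow> real"
  assumes cb: "common_basis I1 I2 B0"
    and mn: "\<forall>B. common_basis I1 I2 B \<longrightarrow> sum w B0 \<le> sum w B"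

locale mincyc = setting +
  fixes c :: "'a list"
  assumes dc: "dicycle E I1 I2 B0 c" and neg: "cycle_val B0 w c < 0"
    and minl: "\<And>c'. dicycle E I1 I2 B0 c' \<Longrightarrow> cycle_val B0 w c' < 0 \<Longrightarrow> length c \<le> length c'"
begin

definition val where "val i = arc_val B0 w (c ! (i mod length c)) (c ! (i mod length c))"
definition G where "G m = (\<Sum>i<m. val i)"

lemma n2: "2 \<le> length c" and dist: "distinct c"
  and arc: "i < length c \<Longrightarrow> exch_arc E I1 I2 B0 (c ! i) (c ! ((i + 1) mod length c))"
  using dc unfolding dicycle_def by auto

lemma npos: "0 < length c" using n2 by linarith

lemma G0: "G 0 = 0" unfolding G_def by simp

lemma GT: "G (length c) = cycle_val B0 w c"
proof -
  have "cycle_val B0 w c = sum_list (map (\<lambda>v. arc_val B0 w v v) c)"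
    using cycle_val_set[OF dist] dist by (simp add: sum_list_distinct_conv_sum_set)
  also have "\<dots> = (\<Sum>i<length c. arc_val B0 w (c ! i) (c ! i))"
    by (simp add: sum_list_sum_nth atLeast0LessThan)
  also have "\<dots> = G (length c)" unfolding G_def val_def by (intro sum.cong) auto
  finally show ?thesis by simp
qed

lemma Gper: "G (m + length c) = G m + G (length c)"
proof (induction m)
  case 0 then show ?case by (simp add: G0)
next
  case (Suc m)
  have "val (m + length c) = val m" unfolding val_def by simp
  then show ?case using Suc unfolding G_def by simp
qed

lemma Gshift: "G (q + L) = G q + (\<Sum>j<L. val (q + j))"
  by (induction L) (simp_all add: G_def)

lemma interval_nonneg:
  assumes q: "q < length c" and L: "2 \<le> L" "L < length c"
    and ch: "exch_arc E I1 I2 B0 (c ! ((q + L - 1) mod length c)) (c ! q)"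
  shows "0 \<le> (\<Sum>j<L. val (q + j))"
proof (rule ccontr)
  assume A: "\<not> ?thesis"
  define n where "n = length c"
  define D where "D = map (\<lambda>j. c ! ((q + j) mod n)) [0..<L]"
  have lD: "length D = L" unfolding D_def by simp
  have Dn: "j < L \<Longrightarrow> D ! j = c ! ((q + j) mod n)" for j unfolding D_def by simp
  have npos': "0 < n" using npos n_def by simp
  have distD: "distinct D"
  proof (subst distinct_conv_nth, intro allI impI)
    fix i j assume ij: "i < length D" "j < length D" "i \<noteq> j"
    then have "(q + i) mod n \<noteq> (q + j) mod n" using modinj[of i n j q] lD L n_def by auto
    then show "D ! i \<noteq> D ! j" using ij lD Dn dist n_def npos'
      by (simp add: nth_eq_iff_index_eq)
  qed
  have dD: "dicycle E I1 I2 B0 D"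
    unfolding dicycle_def
  proof (intro conjI allI impI)
    show "distinct D" by fact
    show "2 \<le> length D" using lD L by simp
    fix j assume j: "j < length D"
    show "exch_arc E I1 I2 B0 (D ! j) (D ! ((j + 1) mod length D))"
    proof (cases "j + 1 < L")
      case True
      have "exch_arc E I1 I2 B0 (c ! ((q + j) mod n)) (c ! (((q + j) mod n + 1) mod n))"
        using arc[of "(q + j) mod n"] npos' n_def by simp
      moreover have "((q + j) mod n + 1) mod n = (q + (j + 1)) mod n" by (simp add: mod_Suc_eq)
      ultimately show ?thesis using True lD Dn j by simp
    next
      case False
      then have "j + 1 = L" using j lD by simp
      then have "q + L - 1 = q + j" by simp
      then show ?thesis using ch lD Dn[of j] Dn[of 0] q n_def L \<open>j + 1 = L\<close> by simp
    qed
  qed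
  have "cycle_val B0 w D = sum_list (map (\<lambda>v. arc_val B0 w v v) D)"
    using cycle_val_set[OF distD] distD by (simp add: sum_list_distinct_conv_sum_set)
  also have "\<dots> = (\<Sum>j<L. val (q + j))"
    unfolding D_def val_def n_def by (simp add: sum_list_sum_nth atLeast0LessThan)
  finally have "cycle_val B0 w D < 0" using A by simp
  from minl[OF dD this] lD L show False by simp
qed

lemma chord_le:
  assumes "p < length c" "q < p" "\<not> (q = 0 \<and> p = length c - 1)"
    and "exch_arc E I1 I2 B0 (c ! p) (c ! q)"
  shows "G q \<le> G (p + 1)"
proof -
  have "0 \<le> (\<Sum>j<p - q + 1. val (q + j))"
    using assms by (intro interval_nonneg) auto
  moreover have "G (q + (p - q + 1)) = G q + (\<Sum>j<p - q + 1. val (q + j))" by (rule Gshift)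
  moreover have "q + (p - q + 1) = p + 1" using assms by simp
  ultimately show ?thesis by simp
qed

lemma chord_gt:
  assumes "p < q" "q < length c" "q \<noteq> p + 1"
    and "exch_arc E I1 I2 B0 (c ! p) (c ! q)"
  shows "G q \<le> G (p + 1) + G (length c)"
proof -
  have e: "(q + (p + length c - q + 1) - 1) mod length c = p"
    using assms by simp
  have "0 \<le> (\<Sum>j<p + length c - q + 1. val (q + j))"
    using assms e by (intro interval_nonneg) auto
  moreover have "G (q + (p + length c - q + 1)) = G q + (\<Sum>j<p + length c - q + 1. val (q + j))" by (rule Gshift)
  moreover have "q + (p + length c - q + 1) = (p + 1) + length c" using assms by simp
  ultimately show ?thesis using Gper[of "p + 1"] by simp
qed

definition key where "key p = (G (p + 1), p)"

lemma key_less: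
  assumes p: "p < length c" and p': "p' < length c" and ne: "p \<noteq> p'"
    and qp: "(p' + 1) mod length c \<noteq> p"
    and ch: "exch_arc E I1 I2 B0 (c ! p) (c ! ((p' + 1) mod length c))"
  shows "key p' < key p"
proof -
  have T: "G (length c) < 0" using GT neg by simp
  show ?thesis
  proof (cases "p' + 1 < length c")
    case True
    then have q: "(p' + 1) mod length c = p' + 1" by simp
    show ?thesis
    proof (cases "p' + 1 \<le> p")
      case True
      moreover have "p' + 1 \<noteq> p" using qp q by simp
      ultimately have "G (p' + 1) \<le> G (p + 1)" using chord_le[of p "p' + 1"] ch q p by simp
      then show ?thesis using True unfolding key_def by auto
    next
      case False
      then have "G (p' + 1) \<le> G (p + 1) + G (length c)" using chord_gt[of p "p' + 1"] ch q qp p True ne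
        by simp
      then show ?thesis using T unfolding key_def by auto
    qed
  next
    case False
    then have pn: "p' + 1 = length c" using p' by simp
    then have "(p' + 1) mod length c = 0" by simp
    then have "0 < p" using qp by auto
    then have "G 0 \<le> G (p + 1)" using chord_le[of p 0] ch pn p ne by (simp add: \<open>(p' + 1) mod length c = 0\<close>)
    then show ?thesis using T pn G0 unfolding key_def by auto
  qed
qed

end

lemma sink_min:
  fixes k :: "'i \<Rightarrow> 'k::linorder"
  assumes "finite S" "S \<noteq> {}" "\<forall>a\<in>S. \<forall>b\<in>S. b \<noteq> a \<longrightarrow> R a b \<longrightarrow> k b < k a"
  shows "\<exists>a\<in>S. \<forall>b\<in>S. b \<noteq> a \<longrightarrow> \<not> R a b"
proof -
  have "Min (k ` S) \<in> k ` S" using assms by (intro Min_in) auto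
  then obtain a where a: "a \<in> S" "k a = Min (k ` S)" by auto
  have "\<forall>b\<in>S. b \<noteq> a \<longrightarrow> \<not> R a b"
  proof (intro ballI impI notI)
    fix b assume b: "b \<in> S" "b \<noteq> a" "R a b"
    then have "k b < k a" using assms(3) a by blast
    moreover have "k a \<le> k b" using a b assms(1) by (simp add: Min_le)
    ultimately show False by simp
  qed
  then show ?thesis using a by blast
qed

lemma sink_max:
  fixes k :: "'i \<Rightarrow> 'k::linorder"
  assumes "finite S" "S \<noteq> {}" "\<forall>a\<in>S. \<forall>b\<in>S. b \<noteq> a \<longrightarrow> R a b \<longrightarrow> k a < k b"
  shows "\<exists>a\<in>S. \<forall>b\<in>S. b \<noteq> a \<longrightarrow> \<not> R a b"
proof -
  have "Max (k ` S) \<in> k ` S" using assms by (intro Max_in) auto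
  then obtain a where a: "a \<in> S" "k a = Max (k ` S)" by auto
  have "\<forall>b\<in>S. b \<noteq> a \<longrightarrow> \<not> R a b"
  proof (intro ballI impI notI)
    fix b assume b: "b \<in> S" "b \<noteq> a" "R a b"
    then have "k a < k b" using assms(3) a by blast
    moreover have "k b \<le> k a" using a b assms(1) by (simp add: Max_ge)
    ultimately show False by simp
  qed
  then show ?thesis using a by blast
qed

context mincyc
begin

lemma B0E: "B0 \<subseteq> E" using cb M1.indep_sub unfolding common_basis_def basis_def by blast

lemma IB0: "I1 B0" "I2 B0" using cb unfolding common_basis_def basis_def by auto

lemma bB0: "basis I1 B0" "basis I2 B0" using cb unfolding common_basis_def by auto

lemma fB0: "finite B0" using M1.indep_fin IB0 by blast

lemma setc: "set c \<subseteq> E"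
proof
  fix v assume "v \<in> set c"
  then obtain i where i: "i < length c" "v = c ! i" by (auto simp: in_set_conv_nth)
  then show "v \<in> E" using arc[OF i(1)] B0E unfolding exch_arc_def by auto
qed

lemma nextB: "i < length c \<Longrightarrow> c ! i \<in> B0 \<Longrightarrow>
   c ! ((i + 1) mod length c) \<notin> B0 \<and> basis I1 (insert (c ! ((i + 1) mod length c)) (B0 - {c ! i}))"
  using arc[of i] unfolding exch_arc_def by auto

lemma nextN: "i < length c \<Longrightarrow> c ! i \<notin> B0 \<Longrightarrow>
   c ! ((i + 1) mod length c) \<in> B0 \<and> basis I2 (insert (c ! i) (B0 - {c ! ((i + 1) mod length c)}))"
  using arc[of i] unfolding exch_arc_def by auto

lemma pred: "q < length c \<Longrightarrow> \<exists>p < length c. (p + 1) mod length c = q"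
proof -
  assume q: "q < length c"
  show ?thesis
  proof (cases q)
    case 0 then show ?thesis using npos by (intro exI[of _ "length c - 1"]) auto
  next
    case (Suc r) then show ?thesis using q by (intro exI[of _ r]) auto
  qed
qed

lemma succ_inj: "a < length c \<Longrightarrow> b < length c \<Longrightarrow> c ! ((a + 1) mod length c) = c ! ((b + 1) mod length c) \<Longrightarrow> a = b"
proof -
  assume ab: "a < length c" "b < length c" "c ! ((a + 1) mod length c) = c ! ((b + 1) mod length c)"
  have "(a + 1) mod length c = (b + 1) mod length c"
    using ab(3) dist npos by (simp add: nth_eq_iff_index_eq)
  then show "a = b" using modinj[of a "length c" b 1] ab by (simp add: add.commute)
qed

lemma nth_inj: "a < length c \<Longrightarrow> b < length c \<Longrightarrow> c ! a = c ! b \<Longrightarrow> a = b"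
  using dist by (simp add: nth_eq_iff_index_eq)

lemma arcI1: "p < length c \<Longrightarrow> p' < length c \<Longrightarrow> c ! p \<in> B0 \<Longrightarrow> c ! p' \<in> B0 \<Longrightarrow>
  I1 (insert (c ! ((p' + 1) mod length c)) (B0 - {c ! p})) \<Longrightarrow>
  exch_arc E I1 I2 B0 (c ! p) (c ! ((p' + 1) mod length c))"
proof -
  assume a: "p < length c" "p' < length c" "c ! p \<in> B0" "c ! p' \<in> B0"
    "I1 (insert (c ! ((p' + 1) mod length c)) (B0 - {c ! p}))"
  have nb: "c ! ((p' + 1) mod length c) \<notin> B0" using nextB a by blast
  have inE: "c ! ((p' + 1) mod length c) \<in> E" using setc npos by (auto intro!: nth_mem)
  have "basis I1 (insert (c ! ((p' + 1) mod length c)) (B0 - {c ! p}))"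
    using M1.indep_card_basis[OF bB0(1) a(5)] M1.card_swap[OF fB0 a(3) nb] by simp
  then show ?thesis unfolding exch_arc_def using a nb inE by auto
qed

lemma arcI2: "p < length c \<Longrightarrow> p' < length c \<Longrightarrow> c ! p \<notin> B0 \<Longrightarrow> c ! p' \<notin> B0 \<Longrightarrow>
  I2 (insert (c ! p') (B0 - {c ! ((p + 1) mod length c)})) \<Longrightarrow>
  exch_arc E I1 I2 B0 (c ! p') (c ! ((p + 1) mod length c))"
proof -
  assume a: "p < length c" "p' < length c" "c ! p \<notin> B0" "c ! p' \<notin> B0"
    "I2 (insert (c ! p') (B0 - {c ! ((p + 1) mod length c)}))"
  have nb: "c ! ((p + 1) mod length c) \<in> B0" using nextN a by blast
  have inE: "c ! p' \<in> E" using setc a by (auto intro!: nth_mem)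
  have "basis I2 (insert (c ! p') (B0 - {c ! ((p + 1) mod length c)}))"
    using M2.indep_card_basis[OF bB0(2) a(5)] M2.card_swap[OF fB0 nb a(4)] by simp
  then show ?thesis unfolding exch_arc_def using a nb inE by auto
qed

lemma contra: False
proof -
  define n where "n = length c"
  define P1 where "P1 = {p. p < n \<and> c ! p \<in> B0}"
  define P2 where "P2 = {p. p < n \<and> c ! p \<notin> B0}"
  define X where "X = set c \<inter> B0"
  define Y where "Y = set c - B0"
  have fP: "finite P1" "finite P2" unfolding P1_def P2_def by auto
  have injx1: "inj_on (\<lambda>p. c ! p) P1" using nth_inj unfolding P1_def n_def by (auto intro: inj_onI)
  have injy1: "inj_on (\<lambda>p. c ! ((p + 1) mod n)) P1" using succ_inj unfolding P1_def n_def by (auto intro: inj_onI)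
  have injx2: "inj_on (\<lambda>p. c ! ((p + 1) mod n)) P2" using succ_inj unfolding P2_def n_def by (auto intro: inj_onI)
  have injy2: "inj_on (\<lambda>p. c ! p) P2" using nth_inj unfolding P2_def n_def by (auto intro: inj_onI)
  have imx1: "(\<lambda>p. c ! p) ` P1 = X" unfolding P1_def X_def n_def by (auto simp: in_set_conv_nth)
  have imy2: "(\<lambda>p. c ! p) ` P2 = Y" unfolding P2_def Y_def n_def by (auto simp: in_set_conv_nth)
  have imy1: "(\<lambda>p. c ! ((p + 1) mod n)) ` P1 = Y"
  proof
    show "(\<lambda>p. c ! ((p + 1) mod n)) ` P1 \<subseteq> Y"
      unfolding P1_def Y_def n_def using nextB npos by (auto intro!: nth_mem)
    show "Y \<subseteq> (\<lambda>p. c ! ((p + 1) mod n)) ` P1"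
    proof
      fix v assume "v \<in> Y"
      then obtain q where q: "q < n" "v = c ! q" "c ! q \<notin> B0" unfolding Y_def n_def by (auto simp: in_set_conv_nth)
      then obtain p where p: "p < n" "(p + 1) mod n = q" using pred n_def by blast
      then have "c ! p \<in> B0" using nextN[of p] q n_def by auto
      then show "v \<in> (\<lambda>p. c ! ((p + 1) mod n)) ` P1" using p q P1_def by auto
    qed
  qed
  have imx2: "(\<lambda>p. c ! ((p + 1) mod n)) ` P2 = X"
  proof
    show "(\<lambda>p. c ! ((p + 1) mod n)) ` P2 \<subseteq> X"
      unfolding P2_def X_def n_def using nextN npos by (auto intro!: nth_mem)
    show "X \<subseteq> (\<lambda>p. c ! ((p + 1) mod n)) ` P2"
    proof
      fix v assume "v \<in> X"
      then obtain q where q: "q < n" "v = c ! q" "c ! q \<in> B0" unfolding X_def n_def by (auto simp: in_set_conv_nth)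
      then obtain p where p: "p < n" "(p + 1) mod n = q" using pred n_def by blast
      then have "c ! p \<notin> B0" using nextB[of p] q n_def by auto
      then show "v \<in> (\<lambda>p. c ! ((p + 1) mod n)) ` P2" using p q P2_def by auto
    qed
  qed
  have ind1: "I1 ((B0 - (\<lambda>p. c ! p) ` P1) \<union> (\<lambda>p. c ! ((p + 1) mod n)) ` P1)"
  proof (rule M1.krogdahl[OF fP(1) IB0(1) injx1 injy1])
    show "(\<lambda>p. c ! p) ` P1 \<subseteq> B0" unfolding P1_def by auto
    show "(\<lambda>p. c ! ((p + 1) mod n)) ` P1 \<inter> B0 = {}" using imy1 Y_def by auto
    show "\<forall>a\<in>P1. I1 (insert (c ! ((a + 1) mod n)) (B0 - {c ! a}))"
      using nextB unfolding P1_def n_def basis_def by blast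
    show "\<forall>S\<subseteq>P1. S \<noteq> {} \<longrightarrow> (\<exists>a\<in>S. \<forall>b\<in>S. b \<noteq> a \<longrightarrow> \<not> I1 (insert (c ! ((b + 1) mod n)) (B0 - {c ! a})))"
    proof (intro allI impI)
      fix S assume S: "S \<subseteq> P1" "S \<noteq> {}"
      show "\<exists>a\<in>S. \<forall>b\<in>S. b \<noteq> a \<longrightarrow> \<not> I1 (insert (c ! ((b + 1) mod n)) (B0 - {c ! a}))"
      proof -
        have fS: "finite S" using S fP(1) finite_subset by blast
        have K: "\<forall>a\<in>S. \<forall>b\<in>S. b \<noteq> a \<longrightarrow> I1 (insert (c ! ((b + 1) mod n)) (B0 - {c ! a})) \<longrightarrow> key b < key a"
        proof (intro ballI impI)
          fix a b assume ab: "a \<in> S" "b \<in> S" "b \<noteq> a" "I1 (insert (c ! ((b + 1) mod n)) (B0 - {c ! a}))"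
          then have a1: "a < n" "c ! a \<in> B0" "b < n" "c ! b \<in> B0" using S P1_def by auto
          have ea: "exch_arc E I1 I2 B0 (c ! a) (c ! ((b + 1) mod length c))"
            using arcI1[of a b] a1 ab n_def by auto
          have "(b + 1) mod length c \<noteq> a" using nextB[of b] a1 n_def by auto
          then show "key b < key a" using key_less[OF _ _ _ _ ea] a1 ab n_def by auto
        qed
        show ?thesis using sink_min[OF fS _ K] S by blast
      qed
    qed
  qed
  have ind2: "I2 ((B0 - (\<lambda>p. c ! ((p + 1) mod n)) ` P2) \<union> (\<lambda>p. c ! p) ` P2)"
  proof (rule M2.krogdahl[OF fP(2) IB0(2) injx2 injy2])
    show "(\<lambda>p. c ! ((p + 1) mod n)) ` P2 \<subseteq> B0" using imx2 X_def by auto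
    show "(\<lambda>p. c ! p) ` P2 \<inter> B0 = {}" unfolding P2_def by auto
    show "\<forall>a\<in>P2. I2 (insert (c ! a) (B0 - {c ! ((a + 1) mod n)}))"
      using nextN unfolding P2_def n_def basis_def by blast
    show "\<forall>S\<subseteq>P2. S \<noteq> {} \<longrightarrow> (\<exists>a\<in>S. \<forall>b\<in>S. b \<noteq> a \<longrightarrow> \<not> I2 (insert (c ! b) (B0 - {c ! ((a + 1) mod n)})))"
    proof (intro allI impI)
      fix S assume S: "S \<subseteq> P2" "S \<noteq> {}"
      show "\<exists>a\<in>S. \<forall>b\<in>S. b \<noteq> a \<longrightarrow> \<not> I2 (insert (c ! b) (B0 - {c ! ((a + 1) mod n)}))"
      proof -
        have fS: "finite S" using S fP(2) finite_subset by blast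
        have K: "\<forall>a\<in>S. \<forall>b\<in>S. b \<noteq> a \<longrightarrow> I2 (insert (c ! b) (B0 - {c ! ((a + 1) mod n)})) \<longrightarrow> key a < key b"
        proof (intro ballI impI)
          fix a b assume ab: "a \<in> S" "b \<in> S" "b \<noteq> a" "I2 (insert (c ! b) (B0 - {c ! ((a + 1) mod n)}))"
          then have a1: "a < n" "c ! a \<notin> B0" "b < n" "c ! b \<notin> B0" using S P2_def by auto
          have ea: "exch_arc E I1 I2 B0 (c ! b) (c ! ((a + 1) mod length c))"
            using arcI2[of a b] a1 ab n_def by auto
          have "(a + 1) mod length c \<noteq> b" using nextN[of a] a1 n_def by auto
          then show "key a < key b" using key_less[OF _ _ _ _ ea] a1 ab n_def by auto
        qed
        show ?thesis using sink_max[OF fS _ K] S by blast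
      qed
    qed
  qed
  define Bn where "Bn = (B0 - X) \<union> Y"
  have I1n: "I1 Bn" using ind1 imx1 imy1 Bn_def by simp
  have I2n: "I2 Bn" using ind2 imx2 imy2 Bn_def by simp
  have fX: "finite X" "finite Y" unfolding X_def Y_def by auto
  have cX: "card X = card P1" using card_image[OF injx1] imx1 by simp
  have cY: "card Y = card P1" using card_image[OF injy1] imy1 by simp
  have "card Bn = card (B0 - X) + card Y"
    unfolding Bn_def using fB0 fX by (intro card_Un_disjoint) (auto simp: Y_def)
  moreover have "card (B0 - X) = card B0 - card X" using fB0 by (intro card_Diff_subset) (auto simp: X_def fX)
  moreover have "card X \<le> card B0" using fB0 by (intro card_mono) (auto simp: X_def)
  ultimately have cBn: "card Bn = card B0" using cX cY by simp
  have "common_basis I1 I2 Bn" unfolding common_basis_def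
    using M1.indep_card_basis[OF bB0(1) I1n cBn] M2.indep_card_basis[OF bB0(2) I2n cBn] by simp
  then have "sum w B0 \<le> sum w Bn" using mn by blast
  moreover have "Bn = B0 - set c \<union> (set c - B0)" unfolding Bn_def X_def Y_def by blast
  ultimately have "sum w B0 \<le> sum w B0 + cycle_val B0 w c" using symdiff_sum[OF fB0 dist] by simp
  then show False using neg by simp
qed

end

context setting
begin

lemma nonneg:
  assumes "dicycle E I1 I2 B0 c"
  shows "0 \<le> cycle_val B0 w c"
proof (rule ccontr)
  assume "\<not> ?thesis"
  then have ex: "\<exists>c. dicycle E I1 I2 B0 c \<and> cycle_val B0 w c < 0" using assms by auto
  define m where "m = (LEAST m. \<exists>c. dicycle E I1 I2 B0 c \<and> cycle_val B0 w c < 0 \<and> length c = m)"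
  have "\<exists>c. dicycle E I1 I2 B0 c \<and> cycle_val B0 w c < 0 \<and> length c = m"
    unfolding m_def by (rule LeastI_ex) (use ex in blast)
  then obtain c0 where c0: "dicycle E I1 I2 B0 c0" "cycle_val B0 w c0 < 0" "length c0 = m" by blast
  have "length c0 \<le> length c'" if "dicycle E I1 I2 B0 c'" "cycle_val B0 w c' < 0" for c'
    unfolding c0(3) m_def by (rule Least_le) (use that in blast)
  then interpret mincyc E I1 I2 B0 w c0
    using c0 by unfold_locales auto
  show False by (rule contra)
qed

end

locale fin = setting +
  fixes Bs :: "'a set" and h1 h2 :: "'a \<Rightarrow> 'a"
  assumes BsE: "Bs \<subseteq> E" and fBs: "finite Bs"
    and h1: "bij_betw h1 (Bs - B0) (B0 - Bs)" "\<forall>y\<in>Bs - B0. basis I1 (insert y (B0 - {h1 y}))"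
    and h2: "bij_betw h2 (Bs - B0) (B0 - Bs)" "\<forall>y\<in>Bs - B0. basis I2 (insert y (B0 - {h2 y}))"
begin

definition Y where "Y = Bs - B0"
definition phi where "phi y = (if y \<in> Y then inv_into Y h1 (h2 y) else y)"
definition m where "m y0 = funpow_dist1 phi y0 y0"
definition cyc where "cyc y0 = map (\<lambda>j. if even j then (phi ^^ (j div 2)) y0 else h2 ((phi ^^ (j div 2)) y0)) [0..<2 * m y0]"

lemma fY: "finite Y" using fBs Y_def by simp

lemma phi_bij: "bij_betw phi Y Y"
proof -
  have "bij_betw (inv_into Y h1 \<circ> h2) Y Y"
    using bij_betw_trans[OF h2(1) bij_betw_inv_into[OF h1(1)]] Y_def by simp
  then show ?thesis by (rule bij_betw_cong[THEN iffD1, rotated]) (simp add: phi_def)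
qed

lemma phi_perm: "phi permutes Y"
  using phi_bij by (rule bij_imp_permutes) (simp add: phi_def)

lemma phi_permutation: "permutation phi"
  using phi_perm fY unfolding permutation_permutes by blast

lemma phiY: "y \<in> Y \<Longrightarrow> phi y \<in> Y" using phi_bij by (meson bij_betwE)

lemma powY: "y \<in> Y \<Longrightarrow> (phi ^^ i) y \<in> Y" by (induction i) (auto simp: phiY)

lemma h1phi: "y \<in> Y \<Longrightarrow> h1 (phi y) = h2 y"
proof -
  assume y: "y \<in> Y"
  have "h2 y \<in> h1 ` Y" using h1(1) h2(1) y Y_def by (metis bij_betw_imp_surj_on bij_betwE)
  then show ?thesis using y phi_def by (simp add: f_inv_into_f)
qed

lemma h2B: "y \<in> Y \<Longrightarrow> h2 y \<in> B0" using h2(1) Y_def by (auto dest: bij_betwE)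

lemma YnB: "y \<in> Y \<Longrightarrow> y \<notin> B0" "y \<in> Y \<Longrightarrow> y \<in> E" using Y_def BsE by auto

lemma h2inj: "inj_on h2 Y" using h2(1) Y_def by (simp add: bij_betw_def)

lemma self_orb: "y0 \<in> orbit phi y0" using phi_permutation by (rule permutation_self_in_orbit)

lemma mpos: "0 < m y0" unfolding m_def by simp

lemma orb_eq: "orbit phi y0 = (\<lambda>i. (phi ^^ i) y0) ` {0..<m y0}"
  unfolding m_def by (rule orbit_conv_funpow_dist1[OF self_orb])

lemma orb_inj: "inj_on (\<lambda>i. (phi ^^ i) y0) {0..<m y0}"
  unfolding m_def by (rule inj_on_funpow_dist1[OF self_orb])

lemma pow_m: "(phi ^^ m y0) y0 = y0"
  unfolding m_def by (rule funpow_dist1_prop[OF self_orb])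

lemma orbY: "y0 \<in> Y \<Longrightarrow> orbit phi y0 \<subseteq> Y" using orb_eq powY by auto

lemma orb_closed: "z \<in> Y \<Longrightarrow> phi z \<in> orbit phi y0 \<Longrightarrow> z \<in> orbit phi y0"
proof -
  assume z: "z \<in> Y" "phi z \<in> orbit phi y0"
  have "y0 \<in> orbit phi (phi z)" using orbit_swap[OF self_orb z(2)] .
  then have "y0 \<in> orbit phi z" using permutation_orbit_step[OF phi_permutation] by simp
  then show "z \<in> orbit phi y0" using orbit_swap[OF self_orb] by blast
qed

lemma len_cyc: "length (cyc y0) = 2 * m y0" unfolding cyc_def by simp

lemma nth_cyc: "j < 2 * m y0 \<Longrightarrow> cyc y0 ! j = (if even j then (phi ^^ (j div 2)) y0 else h2 ((phi ^^ (j div 2)) y0))"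
  unfolding cyc_def by simp

lemma set_cyc: "set (cyc y0) = orbit phi y0 \<union> h2 ` orbit phi y0"
proof
  show "set (cyc y0) \<subseteq> orbit phi y0 \<union> h2 ` orbit phi y0"
  proof
    fix v assume "v \<in> set (cyc y0)"
    then obtain j where j: "j < 2 * m y0" "v = cyc y0 ! j" by (auto simp: in_set_conv_nth len_cyc)
    have "j div 2 < m y0" using j by simp
    then have "(phi ^^ (j div 2)) y0 \<in> orbit phi y0" using orb_eq by auto
    then show "v \<in> orbit phi y0 \<union> h2 ` orbit phi y0" using j nth_cyc by auto
  qed
  show "orbit phi y0 \<union> h2 ` orbit phi y0 \<subseteq> set (cyc y0)"
  proof
    fix v assume "v \<in> orbit phi y0 \<union> h2 ` orbit phi y0"
    then obtain i where i: "i < m y0" "v = (phi ^^ i) y0 \<or> v = h2 ((phi ^^ i) y0)" using orb_eq by auto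
    show "v \<in> set (cyc y0)"
    proof (cases "v = (phi ^^ i) y0")
      case True
      have "cyc y0 ! (2 * i) = v" using nth_cyc[of "2 * i"] i True by simp
      moreover have "2 * i < length (cyc y0)" using i len_cyc by simp
      ultimately show ?thesis by (metis nth_mem)
    next
      case False
      then have "v = h2 ((phi ^^ i) y0)" using i by blast
      then have "cyc y0 ! (2 * i + 1) = v" using nth_cyc[of "2 * i + 1"] i by simp
      moreover have "2 * i + 1 < length (cyc y0)" using i len_cyc by simp
      ultimately show ?thesis by (metis nth_mem)
    qed
  qed
qed

lemma dicyc:
  assumes y0: "y0 \<in> Y"
  shows "dicycle E I1 I2 B0 (cyc y0)"
  unfolding dicycle_def
proof (intro conjI allI impI)
  define M where "M = m y0"
  have Mp: "0 < M" using mpos M_def by simp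
  have pw: "i < M \<Longrightarrow> (phi ^^ i) y0 \<in> Y" for i using powY y0 by simp
  show "2 \<le> length (cyc y0)" using len_cyc Mp M_def by simp
  show "distinct (cyc y0)"
  proof (subst distinct_conv_nth, intro allI impI)
    fix i j assume ij: "i < length (cyc y0)" "j < length (cyc y0)" "i \<noteq> j"
    have di: "i div 2 < M" "j div 2 < M" using ij len_cyc M_def by auto
    show "cyc y0 ! i \<noteq> cyc y0 ! j"
    proof (cases "even i"; cases "even j")
      assume e: "even i" "even j"
      have "i div 2 \<noteq> j div 2" using e ij(3) by (metis dvd_mult_div_cancel)
      then have "(phi ^^ (i div 2)) y0 \<noteq> (phi ^^ (j div 2)) y0"
        using orb_inj[of y0] di M_def by (auto dest: inj_onD)
      then show ?thesis using nth_cyc ij len_cyc e by simp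
    next
      assume e: "odd i" "odd j"
      have "i div 2 \<noteq> j div 2" using e ij(3) by (metis odd_two_times_div_two_succ)
      then have "(phi ^^ (i div 2)) y0 \<noteq> (phi ^^ (j div 2)) y0"
        using orb_inj[of y0] di M_def by (auto dest: inj_onD)
      then have "h2 ((phi ^^ (i div 2)) y0) \<noteq> h2 ((phi ^^ (j div 2)) y0)"
        using h2inj pw di by (metis inj_onD)
      then show ?thesis using nth_cyc ij len_cyc e by simp
    next
      assume e: "even i" "odd j"
      have "(phi ^^ (i div 2)) y0 \<notin> B0" "h2 ((phi ^^ (j div 2)) y0) \<in> B0"
        using pw di YnB h2B by auto
      then show ?thesis using nth_cyc ij len_cyc e by auto
    next
      assume e: "odd i" "even j"
      have "(phi ^^ (j div 2)) y0 \<notin> B0" "h2 ((phi ^^ (i div 2)) y0) \<in> B0"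
        using pw di YnB h2B by auto
      then show ?thesis using nth_cyc ij len_cyc e by auto
    qed
  qed
  fix j assume j: "j < length (cyc y0)"
  define i where "i = j div 2"
  define z where "z = (phi ^^ i) y0"
  have iM: "i < M" using j len_cyc i_def M_def by simp
  have zY: "z \<in> Y" using pw iM z_def by simp
  show "exch_arc E I1 I2 B0 (cyc y0 ! j) (cyc y0 ! ((j + 1) mod length (cyc y0)))"
  proof (cases "even j")
    case True
    have "j < 2 * M" using j len_cyc M_def by simp
    then have j1: "j + 1 < 2 * M" using True by presburger
    then have "(j + 1) mod length (cyc y0) = j + 1" using len_cyc M_def by simp
    moreover have "cyc y0 ! j = z" using nth_cyc j len_cyc True z_def i_def by simp
    moreover have "cyc y0 ! (j + 1) = h2 z" using nth_cyc[of "j + 1"] j1 True z_def i_def M_def by simp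
    moreover have "exch_arc E I1 I2 B0 z (h2 z)"
      unfolding exch_arc_def using zY YnB h2B h2(2) Y_def by auto
    ultimately show ?thesis by simp
  next
    case False
    have cj: "cyc y0 ! j = h2 z" using nth_cyc j len_cyc False z_def i_def by simp
    have nxt: "cyc y0 ! ((j + 1) mod length (cyc y0)) = phi z"
    proof (cases "j + 1 < 2 * M")
      case True
      then have "(j + 1) mod length (cyc y0) = j + 1" using len_cyc M_def by simp
      moreover have "(j + 1) div 2 = i + 1" using False i_def by presburger
      ultimately show ?thesis using nth_cyc[of "j + 1"] True False z_def M_def
        by (simp add: funpow_swap1)
    next
      case False
      then have "j + 1 = 2 * M" using j len_cyc M_def by simp
      then have "(j + 1) mod length (cyc y0) = 0" "i + 1 = M" using len_cyc M_def i_def by auto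
      moreover have "cyc y0 ! 0 = y0" using nth_cyc[of 0] Mp M_def by simp
      moreover have "phi z = (phi ^^ (i + 1)) y0" using z_def by (simp add: funpow_swap1)
      ultimately show ?thesis using pow_m M_def by simp
    qed
    have "basis I1 (insert (phi z) (B0 - {h1 (phi z)}))" using h1(2) phiY[OF zY] Y_def by blast
    then have "basis I1 (insert (phi z) (B0 - {h2 z}))" using h1phi[OF zY] by simp
    then have "exch_arc E I1 I2 B0 (h2 z) (phi z)"
      unfolding exch_arc_def using zY phiY[OF zY] YnB h2B by auto
    then show ?thesis using cj nxt by simp
  qed
qed

lemma cyc_val:
  assumes y0: "y0 \<in> Y"
  shows "cycle_val B0 f (cyc y0) = (\<Sum>y\<in>orbit phi y0. f y - f (h2 y))"
proof -
  define Ob where "Ob = orbit phi y0"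
  have OY: "Ob \<subseteq> Y" using orbY y0 Ob_def by simp
  have fO: "finite Ob" using OY fY finite_subset by blast
  have dist: "distinct (cyc y0)" using dicyc[OF y0] unfolding dicycle_def by simp
  have disj: "Ob \<inter> h2 ` Ob = {}" using OY YnB h2B by blast
  have "cycle_val B0 f (cyc y0) = (\<Sum>v\<in>Ob \<union> h2 ` Ob. arc_val B0 f v v)"
    using cycle_val_set[OF dist] set_cyc Ob_def by simp
  also have "\<dots> = (\<Sum>v\<in>Ob. arc_val B0 f v v) + (\<Sum>v\<in>h2 ` Ob. arc_val B0 f v v)"
    using fO disj by (intro sum.union_disjoint) auto
  also have "(\<Sum>v\<in>Ob. arc_val B0 f v v) = (\<Sum>v\<in>Ob. f v)"
    using OY YnB unfolding arc_val_def by (intro sum.cong) auto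
  also have "(\<Sum>v\<in>h2 ` Ob. arc_val B0 f v v) = (\<Sum>v\<in>h2 ` Ob. - f v)"
    using OY h2B unfolding arc_val_def by (intro sum.cong) auto
  also have "\<dots> = (\<Sum>v\<in>Ob. - f (h2 v))"
    using inj_on_subset[OF h2inj OY] by (simp add: sum.reindex)
  finally show ?thesis unfolding Ob_def by (simp add: sum_subtractf sum_negf)
qed

end

context fin
begin

lemma fB0': "finite B0" using cb M1.indep_fin unfolding common_basis_def basis_def by blast

lemma sumdiff:
  fixes f :: "'a \<Rightarrow> 'g::ab_group_add"
  shows "(\<Sum>y\<in>Y. f y - f (h2 y)) = sum f Bs - sum f B0"
proof -
  have "(\<Sum>y\<in>Y. f y - f (h2 y)) = sum f Y - (\<Sum>y\<in>Y. f (h2 y))" by (simp add: sum_subtractf)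
  also have "(\<Sum>y\<in>Y. f (h2 y)) = sum f (B0 - Bs)"
    using sum.reindex_bij_betw[OF h2(1), of f] Y_def by simp
  finally have e: "(\<Sum>y\<in>Y. f y - f (h2 y)) = sum f (Bs - B0) - sum f (B0 - Bs)" using Y_def by simp
  have "sum f Bs = sum f (Bs \<inter> B0) + sum f (Bs - B0)" using fBs by (rule sum.Int_Diff)
  moreover have "sum f B0 = sum f (B0 \<inter> Bs) + sum f (B0 - Bs)" using fB0' by (rule sum.Int_Diff)
  ultimately show ?thesis using e by (simp add: Int_commute)
qed

lemma ind:
  fixes psi :: "'a \<Rightarrow> 'g::ab_group_add"
  shows "S \<subseteq> Y \<Longrightarrow> (\<forall>z\<in>S. phi z \<in> S) \<Longrightarrow>
    0 \<le> (\<Sum>y\<in>S. w y - w (h2 y)) \<and>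
    ((\<Sum>y\<in>S. psi y - psi (h2 y)) \<noteq> 0 \<longrightarrow>
      (\<exists>cs. dicycle E I1 I2 B0 cs \<and> cycle_val B0 psi cs \<noteq> 0 \<and> cycle_val B0 w cs \<le> (\<Sum>y\<in>S. w y - w (h2 y))))"
proof (induction "card S" arbitrary: S rule: less_induct)
  case (less S)
  note SY = less.prems(1) and inv = less.prems(2)
  have fS: "finite S" using SY fY finite_subset by blast
  show ?case
  proof (cases "S = {}")
    case True then show ?thesis by simp
  next
    case False
    then obtain y0 where y0: "y0 \<in> S" by blast
    have y0Y: "y0 \<in> Y" using y0 SY by blast
    define Ob where "Ob = orbit phi y0"
    have powS: "(phi ^^ i) y0 \<in> S" for i by (induction i) (use y0 inv in auto)
    have ObS: "Ob \<subseteq> S" unfolding Ob_def using orb_eq powS by auto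
    define S' where "S' = S - Ob"
    have S'Y: "S' \<subseteq> Y" using SY S'_def by auto
    have inv': "\<forall>z\<in>S'. phi z \<in> S'"
    proof
      fix z assume z: "z \<in> S'"
      then have "phi z \<in> S" using inv S'_def by auto
      moreover have "phi z \<notin> Ob" using orb_closed[of z y0] z S'Y S'_def Ob_def by auto
      ultimately show "phi z \<in> S'" using S'_def by auto
    qed
    have cS': "card S' < card S"
      unfolding S'_def using fS ObS self_orb[of y0] Ob_def
      by (intro psubset_card_mono) (use y0 in auto)
    have IH: "0 \<le> (\<Sum>y\<in>S'. w y - w (h2 y)) \<and>
      ((\<Sum>y\<in>S'. psi y - psi (h2 y)) \<noteq> 0 \<longrightarrow>
      (\<exists>cs. dicycle E I1 I2 B0 cs \<and> cycle_val B0 psi cs \<noteq> 0 \<and> cycle_val B0 w cs \<le> (\<Sum>y\<in>S'. w y - w (h2 y))))"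
      using less.hyps[OF cS' S'Y inv'] .
    have spl: "sum f S = sum f S' + sum f Ob" for f :: "'a \<Rightarrow> 'b::ab_group_add"
      unfolding S'_def using sum.subset_diff[OF ObS fS] .
    have dC: "dicycle E I1 I2 B0 (cyc y0)" using dicyc[OF y0Y] .
    have vw: "cycle_val B0 w (cyc y0) = (\<Sum>y\<in>Ob. w y - w (h2 y))" using cyc_val[OF y0Y] Ob_def by simp
    have vp: "cycle_val B0 psi (cyc y0) = (\<Sum>y\<in>Ob. psi y - psi (h2 y))" using cyc_val[OF y0Y] Ob_def by simp
    have nn: "0 \<le> (\<Sum>y\<in>Ob. w y - w (h2 y))" using nonneg[OF dC] vw by simp
    have A: "0 \<le> (\<Sum>y\<in>S. w y - w (h2 y))" using spl[of "\<lambda>y. w y - w (h2 y)"] IH nn by simp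
    have Bc: "(\<exists>cs. dicycle E I1 I2 B0 cs \<and> cycle_val B0 psi cs \<noteq> 0 \<and> cycle_val B0 w cs \<le> (\<Sum>y\<in>S. w y - w (h2 y)))"
      if ne: "(\<Sum>y\<in>S. psi y - psi (h2 y)) \<noteq> 0"
    proof (cases "(\<Sum>y\<in>Ob. psi y - psi (h2 y)) = 0")
      case True
      then have "(\<Sum>y\<in>S'. psi y - psi (h2 y)) \<noteq> 0" using ne spl[of "\<lambda>y. psi y - psi (h2 y)"] by simp
      then obtain cs where cs: "dicycle E I1 I2 B0 cs" "cycle_val B0 psi cs \<noteq> 0"
        "cycle_val B0 w cs \<le> (\<Sum>y\<in>S'. w y - w (h2 y))" using IH by blast
      then show ?thesis using spl[of "\<lambda>y. w y - w (h2 y)"] nn by (intro exI[of _ cs]) auto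
    next
      case False
      then show ?thesis using dC vp vw spl[of "\<lambda>y. w y - w (h2 y)"] IH
        by (intro exI[of _ "cyc y0"]) auto
    qed
    show ?thesis using A Bc by blast
  qed
qed

end

theorem lemma3p9:
  fixes E :: "'a set" and I1 I2 :: "'a set \<Rightarrow> bool"
    and \<psi> :: "'a \<Rightarrow> 'g::ab_group_add" and w :: "'a \<Rightarrow> real"
    and B0 Bstar :: "'a set" and C :: "'a list"
  assumes "matroid E I1" and "matroid E I2"
    and "common_basis I1 I2 B0"
    and "\<forall>B. common_basis I1 I2 B \<longrightarrow> sum w B0 \<le> sum w B"
    and "sum \<psi> B0 = 0"
    and "dicycle E I1 I2 B0 C" and "cycle_val B0 \<psi> C \<noteq> 0"
    and "\<forall>C'. dicycle E I1 I2 B0 C' \<and> cycle_val B0 \<psi> C' \<noteq> 0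
              \<longrightarrow> cycle_val B0 w C \<le> cycle_val B0 w C'"
    and "common_basis I1 I2 Bstar" and "sum \<psi> Bstar \<noteq> 0"
  shows "sum w (B0 - set C \<union> (set C - B0)) \<le> sum w Bstar"
proof -
  interpret S: setting E I1 I2 B0 w
    by (unfold_locales) (use assms(1-4) in auto)
  have bB0: "basis I1 B0" "basis I2 B0" using assms(3) unfolding common_basis_def by auto
  have bBs: "basis I1 Bstar" "basis I2 Bstar" using assms(9) unfolding common_basis_def by auto
  have BsE: "Bstar \<subseteq> E" using bBs S.M1.indep_sub unfolding basis_def by blast
  have fBs: "finite Bstar" using bBs S.M1.indep_fin unfolding basis_def by blast
  have fB0: "finite B0" using bB0 S.M1.indep_fin unfolding basis_def by blast
  obtain h1 where h1: "bij_betw h1 (Bstar - B0) (B0 - Bstar)" "\<forall>y\<in>Bstar - B0. basis I1 (insert y (B0 - {h1 y}))"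
    using S.M1.brualdi[OF bB0(1) bBs(1)] by blast
  obtain h2 where h2: "bij_betw h2 (Bstar - B0) (B0 - Bstar)" "\<forall>y\<in>Bstar - B0. basis I2 (insert y (B0 - {h2 y}))"
    using S.M2.brualdi[OF bB0(2) bBs(2)] by blast
  interpret F: fin E I1 I2 B0 w Bstar h1 h2
    by (unfold_locales) (use BsE fBs h1 h2 in auto)
  have "(\<Sum>y\<in>F.Y. \<psi> y - \<psi> (h2 y)) = sum \<psi> Bstar - sum \<psi> B0" by (rule F.sumdiff)
  then have ne: "(\<Sum>y\<in>F.Y. \<psi> y - \<psi> (h2 y)) \<noteq> 0" using assms(5,10) by simp
  have "\<exists>cs. dicycle E I1 I2 B0 cs \<and> cycle_val B0 \<psi> cs \<noteq> 0 \<and> cycle_val B0 w cs \<le> (\<Sum>y\<in>F.Y. w y - w (h2 y))"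
    using F.ind[of F.Y \<psi>] F.phiY ne by blast
  then obtain cs where cs: "dicycle E I1 I2 B0 cs" "cycle_val B0 \<psi> cs \<noteq> 0"
    "cycle_val B0 w cs \<le> sum w Bstar - sum w B0" using F.sumdiff[of w] by auto
  have "cycle_val B0 w C \<le> cycle_val B0 w cs" using assms(8) cs by blast
  moreover have "distinct C" using assms(6) unfolding dicycle_def by simp
  ultimately show ?thesis using symdiff_sum[OF fB0, of C w] cs(3) by simp
qed

end
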